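(* Let $m$ be a positive integer and suppose that infinitely many of the boards $G_{m,n}$ ($n\ge 1$) have outcome class $V$. Then there exists a nonnegative integer $k<2m$ such that for every nonnegative integer $i$, the board $G_{m,k+2mi}$ has outcome class $V$.
   Context: Domineering is a two-player game played on a rectangular grid of unit squares. The players alternate placing dominoes, each covering two adjacent unoccupied squares; the player Vertical must place dominoes vertically (covering two squares in the same column), and the player Horizontal must place them horizontally (covering two squares in the same row). A player with no legal move on her turn loses. $G_{m,n}$ denotes the empty board with vertical dimension $m$ (number of rows) and horizontal dimension $n$ (number of columns). Every position has one of four outcome classes under optimal play: $V$ (Vertical wins whoever moves first), $H$ (Horizontal wins whoever moves first), $1$ (the player who moves first wins), $2$ (the player who moves second wins). *)

theory Defs
  imports Main
begin

text \<open>Domineering. A position is the set of currently free (unoccupied) cells,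
  a cell being a pair (row, column). Vertical covers (r,c),(r+1,c);
  Horizontal covers (r,c),(r,c+1).\<close>

type_synonym cells = "(nat \<times> nat) set"

definition board :: "nat \<Rightarrow> nat \<Rightarrow> cells" where
  "board m n = {0..<m} \<times> {0..<n}"

text \<open>vwin k S: Vertical, moving first on S, wins (search depth k, which is
  exact whenever card S \<le> k, since each move removes two cells).
  hwin likewise for Horizontal.\<close>

fun vwin :: "nat \<Rightarrow> cells \<Rightarrow> bool" and hwin :: "nat \<Rightarrow> cells \<Rightarrow> bool" where
  "vwin 0 S = False"
| "vwin (Suc k) S = (\<exists>r c. (r, c) \<in> S \<and> (Suc r, c) \<in> S \<and>
       \<not> hwin k (S - {(r, c), (Suc r, c)}))"
| "hwin 0 S = False"
| "hwin (Suc k) S = (\<exists>r c. (r, c) \<in> S \<and> (r, Suc c) \<in> S \<and>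
       \<not> vwin k (S - {(r, c), (r, Suc c)}))"

definition V_first_wins :: "cells \<Rightarrow> bool" where
  "V_first_wins S = vwin (card S) S"

definition H_first_wins :: "cells \<Rightarrow> bool" where
  "H_first_wins S = hwin (card S) S"

datatype outcome = OV | OH | ONE | TWO

definition outcome_class :: "cells \<Rightarrow> outcome" where
  "outcome_class S =
     (if V_first_wins S \<and> \<not> H_first_wins S then OV
      else if H_first_wins S \<and> \<not> V_first_wins S then OH
      else if V_first_wins S \<and> H_first_wins S then ONE
      else TWO)"

end

theory Submission
  imports Defs
begin

lemma stab:
  "finite S \<Longrightarrow> card S \<le> k \<Longrightarrow> card S \<le> k' \<Longrightarrow> vwin k S = vwin k' S \<and> hwin k S = hwin k' S"
proof (induction k arbitrary: k' S)
  case 0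
  then have "S = {}" by simp
  then show ?case by (cases k') auto
next
  case (Suc k)
  show ?case
  proof (cases k')
    case 0
    then have "S = {}" using Suc.prems by simp
    then show ?thesis using 0 by simp
  next
    case (Suc j)
    have h1: "hwin k (S - {(r,c),(Suc r,c)}) = hwin j (S - {(r,c),(Suc r,c)})"
      if "(r,c)\<in>S" "(Suc r,c)\<in>S" for r c
    proof -
      have "card (S - {(r,c),(Suc r,c)}) = card S - 2"
        using that Suc.prems(1) by (simp add: card_Diff_subset)
      then show ?thesis using Suc.IH[of "S - {(r,c),(Suc r,c)}" j] Suc.prems \<open>k' = Suc j\<close> by auto
    qed
    have h2: "vwin k (S - {(r,c),(r,Suc c)}) = vwin j (S - {(r,c),(r,Suc c)})"
      if "(r,c)\<in>S" "(r,Suc c)\<in>S" for r c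
    proof -
      have "card (S - {(r,c),(r,Suc c)}) = card S - 2"
        using that Suc.prems(1) by (simp add: card_Diff_subset)
      then show ?thesis using Suc.IH[of "S - {(r,c),(r,Suc c)}" j] Suc.prems \<open>k' = Suc j\<close> by auto
    qed
    show ?thesis using \<open>k' = Suc j\<close> h1 h2 by simp (metis (no_types, lifting))
  qed
qed

lemma VW_unfold:
  assumes "finite S"
  shows "V_first_wins S = (\<exists>r c. (r,c)\<in>S \<and> (Suc r,c)\<in>S \<and> \<not> H_first_wins (S - {(r,c),(Suc r,c)}))"
proof (cases "card S")
  case 0
  then have "S = {}" using assms by simp
  then show ?thesis by (simp add: V_first_wins_def)
next
  case (Suc k)
  have h: "hwin k (S - {(r,c),(Suc r,c)}) = H_first_wins (S - {(r,c),(Suc r,c)})"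
    if "(r,c)\<in>S" "(Suc r,c)\<in>S" for r c
  proof -
    have "card (S - {(r,c),(Suc r,c)}) = card S - 2"
      using that assms by (simp add: card_Diff_subset)
    then show ?thesis using stab[of "S - {(r,c),(Suc r,c)}" k "card (S - {(r,c),(Suc r,c)})"] assms Suc
      by (auto simp: H_first_wins_def)
  qed
  show ?thesis using Suc h by (auto simp: V_first_wins_def)
qed

lemma HW_unfold:
  assumes "finite S"
  shows "H_first_wins S = (\<exists>r c. (r,c)\<in>S \<and> (r,Suc c)\<in>S \<and> \<not> V_first_wins (S - {(r,c),(r,Suc c)}))"
proof (cases "card S")
  case 0
  then have "S = {}" using assms by simp
  then show ?thesis by (simp add: H_first_wins_def)
next
  case (Suc k)
  have h: "vwin k (S - {(r,c),(r,Suc c)}) = V_first_wins (S - {(r,c),(r,Suc c)})"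
    if "(r,c)\<in>S" "(r,Suc c)\<in>S" for r c
  proof -
    have "card (S - {(r,c),(r,Suc c)}) = card S - 2"
      using that assms by (simp add: card_Diff_subset)
    then show ?thesis using stab[of "S - {(r,c),(r,Suc c)}" k "card (S - {(r,c),(r,Suc c)})"] assms Suc
      by (auto simp: V_first_wins_def)
  qed
  show ?thesis using Suc h by (auto simp: H_first_wins_def)
qed

definition Areg :: "nat \<Rightarrow> nat \<Rightarrow> cells" where "Areg m n = {0..<m} \<times> {n..<n+m}"
definition mirs :: "nat \<Rightarrow> nat \<Rightarrow> cells \<Rightarrow> cells" where
  "mirs m n a = (\<lambda>(r,c). (c - n, n+m+r)) ` a"
definition Zs :: "nat \<Rightarrow> nat \<Rightarrow> cells \<Rightarrow> cells \<Rightarrow> cells" where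
  "Zs m n Q a = Q \<union> a \<union> mirs m n a"

lemma mir_mem:
  assumes "a \<subseteq> Areg m n"
  shows "(x,y) \<in> mirs m n a \<longleftrightarrow> n+m \<le> y \<and> (y-(n+m), n+x) \<in> a"
proof
  assume "(x,y) \<in> mirs m n a"
  then obtain r c where "(r,c)\<in>a" "x = c - n" "y = n+m+r" unfolding mirs_def by auto
  moreover then have "n \<le> c" using assms by (auto simp: Areg_def)
  ultimately show "n+m \<le> y \<and> (y-(n+m), n+x) \<in> a" by auto
next
  assume h: "n+m \<le> y \<and> (y-(n+m), n+x) \<in> a"
  then have "(\<lambda>(r,c). (c - n, n+m+r)) (y-(n+m), n+x) \<in> mirs m n a" unfolding mirs_def by blast
  then show "(x,y) \<in> mirs m n a" using h by simp
qed

lemma key: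
  assumes "Q \<subseteq> board m n" "a \<subseteq> Areg m n"
  shows "(V_first_wins (Zs m n Q a) \<longrightarrow> V_first_wins Q) \<and>
         (\<not> H_first_wins (Zs m n Q a) \<longrightarrow> \<not> H_first_wins Q)"
  using assms
proof (induction "card Q + card a" arbitrary: Q a rule: less_induct)
  case less
  have fQ: "finite Q" using less.prems(1) finite_subset unfolding board_def by blast
  have fa: "finite a" using less.prems(2) finite_subset unfolding Areg_def by blast
  have fZ: "finite (Zs m n Q a)" using fQ fa unfolding Zs_def mirs_def by simp
  have cQ: "\<And>x y. (x,y)\<in>Q \<Longrightarrow> y < n" using less.prems(1) by (auto simp: board_def)
  have ca: "\<And>x y. (x,y)\<in>a \<Longrightarrow> n \<le> y \<and> y < n+m" using less.prems(2) by (auto simp: Areg_def)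
  have mm: "\<And>x y. (x,y)\<in>mirs m n a \<longleftrightarrow> n+m \<le> y \<and> (y-(n+m), n+x) \<in> a"
    using mir_mem[OF less.prems(2)] .
  have P1: "V_first_wins Q" if VZ: "V_first_wins (Zs m n Q a)"
  proof -
    obtain r c where rc: "(r,c)\<in>Zs m n Q a" "(Suc r,c)\<in>Zs m n Q a"
      and nh: "\<not> H_first_wins (Zs m n Q a - {(r,c),(Suc r,c)})"
      using VZ VW_unfold[OF fZ] by blast
    consider "c < n" | "n \<le> c \<and> c < n+m" | "n+m \<le> c" by linarith
    then show ?thesis
    proof cases
      case 1
      then have inQ: "(r,c)\<in>Q" "(Suc r,c)\<in>Q" using rc ca mm unfolding Zs_def by fastforce+
      let ?Q' = "Q - {(r,c),(Suc r,c)}"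
      have eq: "Zs m n Q a - {(r,c),(Suc r,c)} = Zs m n ?Q' a"
        using 1 ca mm unfolding Zs_def by fastforce
      have "card ?Q' < card Q" using inQ fQ by (intro psubset_card_mono) auto
      then have "\<not> H_first_wins ?Q'" using less.hyps[of ?Q' a] less.prems nh eq by auto
      then show ?thesis using inQ VW_unfold[OF fQ] by blast
    next
      case 2
      then have ina: "(r,c)\<in>a" "(Suc r,c)\<in>a" using rc cQ mm unfolding Zs_def by fastforce+
      let ?D = "{(r,c),(Suc r,c)}"
      let ?Z1 = "Zs m n Q a - ?D"
      have e1: "(c-n, n+m+r) \<in> ?Z1" using ina 2 mm unfolding Zs_def by auto
      have e2: "(c-n, Suc (n+m+r)) \<in> ?Z1" using ina 2 mm unfolding Zs_def by auto
      have fZ1: "finite ?Z1" using fZ by simp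
      have "V_first_wins (?Z1 - {(c-n, n+m+r),(c-n, Suc (n+m+r))})"
        using nh HW_unfold[OF fZ1] e1 e2 by blast
      moreover have sub': "a - ?D \<subseteq> Areg m n" using less.prems(2) by blast
      moreover have "?Z1 - {(c-n, n+m+r),(c-n, Suc (n+m+r))} = Zs m n Q (a - ?D)" (is "?L = ?R")
      proof -
        have mm': "\<And>x y. (x,y)\<in>mirs m n (a - ?D) \<longleftrightarrow> n+m \<le> y \<and> (y-(n+m), n+x) \<in> a - ?D"
          using mir_mem[OF sub'] .
        note oc = \<open>n \<le> c \<and> c < n+m\<close>
        show ?thesis
        proof (rule set_eqI)
          fix p :: "nat \<times> nat"
          obtain x y where p: "p = (x,y)" by (cases p)
          consider "y < n" | "n \<le> y \<and> y < n+m" | "n+m \<le> y" by linarith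
          then show "p \<in> ?L \<longleftrightarrow> p \<in> ?R"
          proof cases
            case 1
            then show ?thesis using oc ca[of x y] by (auto simp: p Zs_def mm mm')
          next
            case 2
            then show ?thesis using oc cQ[of x y] by (auto simp: p Zs_def mm mm')
          next
            case 3
            then have "(x,y) \<notin> Q" "(x,y) \<notin> a" using cQ[of x y] ca[of x y] by auto
            then show ?thesis using oc 3 by (auto simp: p Zs_def mm mm')
          qed
        qed
      qed
      moreover have "card (a - ?D) < card a" using ina fa by (intro psubset_card_mono) auto
      ultimately show ?thesis using less.hyps[of Q "a - ?D"] less.prems by auto
    next
      case 3
      then have inm: "(c-(n+m), n+r) \<in> a" "(c-(n+m), Suc (n+r))\<in>a"
        using rc cQ ca mm unfolding Zs_def by fastforce+
      let ?D = "{(r,c),(Suc r,c)}"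
      let ?E = "{(c-(n+m), n+r),(c-(n+m), Suc (n+r))}"
      let ?Z1 = "Zs m n Q a - ?D"
      have e1: "(c-(n+m), n+r) \<in> ?Z1" using inm 3 ca unfolding Zs_def by fastforce
      have e2: "(c-(n+m), Suc (n+r)) \<in> ?Z1" using inm 3 ca unfolding Zs_def by fastforce
      have fZ1: "finite ?Z1" using fZ by simp
      have "V_first_wins (?Z1 - ?E)"
        using nh HW_unfold[OF fZ1] e1 e2 by blast
      moreover have sub': "a - ?E \<subseteq> Areg m n" using less.prems(2) by blast
      moreover have "?Z1 - ?E = Zs m n Q (a - ?E)" (is "?L = ?R")
      proof -
        have mm': "\<And>x y. (x,y)\<in>mirs m n (a - ?E) \<longleftrightarrow> n+m \<le> y \<and> (y-(n+m), n+x) \<in> a - ?E"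
          using mir_mem[OF sub'] .
        note oc = \<open>n+m \<le> c\<close>
        show ?thesis
        proof (rule set_eqI)
          fix p :: "nat \<times> nat"
          obtain x y where p: "p = (x,y)" by (cases p)
          consider "y < n" | "n \<le> y \<and> y < n+m" | "n+m \<le> y" by linarith
          then show "p \<in> ?L \<longleftrightarrow> p \<in> ?R"
          proof cases
            case 1
            then show ?thesis using oc ca[of x y] by (auto simp: p Zs_def mm mm')
          next
            case 2
            then show ?thesis using oc cQ[of x y] by (auto simp: p Zs_def mm mm')
          next
            case 3
            then have "(x,y) \<notin> Q" "(x,y) \<notin> a" using cQ[of x y] ca[of x y] by auto
            then show ?thesis using oc 3 inm by (auto simp: p Zs_def mm mm')
          qed
        qed
      qed
      moreover have "card (a - ?E) < card a" using inm fa by (intro psubset_card_mono) auto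
      ultimately show ?thesis using less.hyps[of Q "a - ?E"] less.prems by auto
    qed
  qed
  have P2: "\<not> H_first_wins Q" if nHZ: "\<not> H_first_wins (Zs m n Q a)"
  proof
    assume "H_first_wins Q"
    then obtain r c where rc: "(r,c)\<in>Q" "(r,Suc c)\<in>Q"
      and nv: "\<not> V_first_wins (Q - {(r,c),(r,Suc c)})"
      using HW_unfold[OF fQ] by blast
    let ?E = "{(r,c),(r,Suc c)}"
    have "V_first_wins (Zs m n Q a - ?E)" using nHZ HW_unfold[OF fZ] rc unfolding Zs_def by blast
    moreover have "Zs m n Q a - ?E = Zs m n (Q - ?E) a"
      using rc cQ ca mm unfolding Zs_def by fastforce
    moreover have "card (Q - ?E) < card Q" using rc fQ by (intro psubset_card_mono) auto
    ultimately show False using less.hyps[of "Q - ?E" a] less.prems nv by auto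
  qed
  show ?case using P1 P2 by blast
qed

lemma OV_iff: "outcome_class S = OV \<longleftrightarrow> V_first_wins S \<and> \<not> H_first_wins S"
  by (simp add: outcome_class_def)

lemma Zs_full: "Zs m n (board m n) (Areg m n) = board m (n + 2*m)"
proof (rule set_eqI)
  fix p :: "nat \<times> nat"
  obtain x y where p: "p = (x,y)" by (cases p)
  have mm: "(x,y) \<in> mirs m n (Areg m n) \<longleftrightarrow> n+m \<le> y \<and> (y-(n+m), n+x) \<in> Areg m n"
    using mir_mem[of "Areg m n" m n] by simp
  show "p \<in> Zs m n (board m n) (Areg m n) \<longleftrightarrow> p \<in> board m (n + 2*m)"
    unfolding p Zs_def using mm by (auto simp: board_def Areg_def)
qed

lemma step: "outcome_class (board m (n + 2*m)) = OV \<Longrightarrow> outcome_class (board m n) = OV"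
  using key[of "board m n" m n "Areg m n"] Zs_full[of m n] unfolding OV_iff by auto

lemma stepk: "outcome_class (board m (n + 2*m*j)) = OV \<Longrightarrow> outcome_class (board m n) = OV"
proof (induction j)
  case 0 then show ?case by simp
next
  case (Suc j)
  have "n + 2*m*Suc j = (n + 2*m*j) + 2*m" by simp
  then have "outcome_class (board m (n + 2*m*j + 2*m)) = OV" using Suc.prems by (simp only:)
  then have "outcome_class (board m (n + 2*m*j)) = OV" by (rule step)
  then show ?case by (rule Suc.IH)
qed

lemma not0: "outcome_class (board m 0) \<noteq> OV"
  by (simp add: OV_iff board_def V_first_wins_def)

theorem lemma3p4:
  fixes m :: nat
  assumes "m \<ge> 1"
    and "infinite {n::nat. n \<ge> 1 \<and> outcome_class (board m n) = OV}"
  shows "\<exists>k::nat. k < 2 * m \<and> (\<forall>i::nat. outcome_class (board m (k + 2 * m * i)) = OV)"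
proof -
  let ?S = "{n::nat. n \<ge> 1 \<and> outcome_class (board m n) = OV}"
  have "?S \<subseteq> (\<Union>r<2*m. {n\<in>?S. n mod (2*m) = r})"
    using assms(1) by auto
  moreover have "\<exists>r<2*m. infinite {n\<in>?S. n mod (2*m) = r}"
  proof (rule ccontr)
    assume "\<not> ?thesis"
    then have "finite (\<Union>r<2*m. {n\<in>?S. n mod (2*m) = r})" by auto
    then show False using calculation assms(2) finite_subset by blast
  qed
  ultimately have "\<exists>r<2*m. infinite {n\<in>?S. n mod (2*m) = r}" by blast
  then obtain k where k: "k < 2*m" and inf: "infinite {n\<in>?S. n mod (2*m) = k}" by blast
  have "outcome_class (board m (k + 2*m*i)) = OV" for i
  proof -
    have "\<exists>n\<in>{n\<in>?S. n mod (2*m) = k}. k + 2*m*i \<le> n"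
    proof (rule ccontr)
      assume "\<not> ?thesis"
      then have "{n\<in>?S. n mod (2*m) = k} \<subseteq> {..<k + 2*m*i}" by auto
      then show False using inf finite_subset by blast
    qed
    then obtain n where n: "n \<in> {n\<in>?S. n mod (2*m) = k}" "k + 2*m*i \<le> n" by blast
    have nd: "n = k + 2*m*(n div (2*m))" using n(1) mod_mult_div_eq[of n "2*m"] by simp
    have "i \<le> n div (2*m)"
    proof (rule ccontr)
      assume "\<not> i \<le> n div (2*m)"
      then have "n div (2*m) + 1 \<le> i" by simp
      then have "2*m*(n div (2*m) + 1) \<le> 2*m*i" by (rule mult_le_mono2)
      then show False using nd n(2) k by (simp add: algebra_simps)
    qed
    then obtain d where d: "n div (2*m) = i + d" using le_Suc_ex by blast
    then have "n = (k + 2*m*i) + 2*m*(n div (2*m) - i)"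
      using nd by (simp add: algebra_simps)
    then show ?thesis using n(1) stepk[of m "k + 2*m*i" "n div (2*m) - i"] by simp
  qed
  then show ?thesis using k by blast
qed

end
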